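(* Let $H$ and $G$ be finite simple graphs with $n=|V(H)|$, $\Delta=\Delta(H)\ge 1$ and $\delta=\delta(G)\ge 1$. Let $S\subseteq V(H)$ be a maximum $G$-free subset of $V(H)$, and for each integer $i\ge 0$ let $n_i(S)$ denote the number of vertices of $V(H)\setminus S$ having exactly $i$ neighbours in $S$. Then \[ n-\frac{\sum_{i=\delta}^{\Delta} i\, n_i(S)}{\delta}\ \le\ |S|\ \le\ n-\frac{\sum_{i=\delta}^{\Delta} i\, n_i(S)}{\Delta}.\]
   Context: All graphs are finite, simple and undirected. For $W\subseteq V(H)$, $H[W]$ denotes the induced subgraph on $W$. A set $S\subseteq V(H)$ is called $G$-free if $H[S]$ contains no subgraph isomorphic to $G$. A maximum $G$-free subset of $V(H)$ is a $G$-free subset $S\subseteq V(H)$ of largest possible cardinality. $\Delta(H)$ is the maximum degree of $H$, $\delta(G)$ the minimum degree of $G$. *)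

theory Defs
  imports Complex_Main
begin

definition simple_graph :: "'a set \<Rightarrow> 'a set set \<Rightarrow> bool" where
  "simple_graph V E \<longleftrightarrow> finite V \<and> (\<forall>e\<in>E. e \<subseteq> V \<and> card e = 2)"

definition neighbours :: "'a set \<Rightarrow> 'a set set \<Rightarrow> 'a \<Rightarrow> 'a set" where
  "neighbours V E v = {u \<in> V. {v, u} \<in> E}"

definition degree :: "'a set \<Rightarrow> 'a set set \<Rightarrow> 'a \<Rightarrow> nat" where
  "degree V E v = card (neighbours V E v)"

definition max_degree :: "'a set \<Rightarrow> 'a set set \<Rightarrow> nat" where
  "max_degree V E = Max (degree V E ` V)"

definition min_degree :: "'a set \<Rightarrow> 'a set set \<Rightarrow> nat" where
  "min_degree V E = Min (degree V E ` V)"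

definition induced_edges :: "'a set set \<Rightarrow> 'a set \<Rightarrow> 'a set set" where
  "induced_edges E W = {e \<in> E. e \<subseteq> W}"

definition contains_copy :: "'b set \<Rightarrow> 'b set set \<Rightarrow> 'a set \<Rightarrow> 'a set set \<Rightarrow> bool" where
  "contains_copy VG EG W F \<longleftrightarrow>
     (\<exists>f. inj_on f VG \<and> f ` VG \<subseteq> W \<and> (\<forall>e\<in>EG. f ` e \<in> F))"

definition G_free :: "'b set \<Rightarrow> 'b set set \<Rightarrow> 'a set \<Rightarrow> 'a set set \<Rightarrow> 'a set \<Rightarrow> bool" where
  "G_free VG EG VH EH S \<longleftrightarrow> S \<subseteq> VH \<and> \<not> contains_copy VG EG S (induced_edges EH S)"

definition max_G_free :: "'b set \<Rightarrow> 'b set set \<Rightarrow> 'a set \<Rightarrow> 'a set set \<Rightarrow> 'a set \<Rightarrow> bool" where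
  "max_G_free VG EG VH EH S \<longleftrightarrow> G_free VG EG VH EH S \<and>
     (\<forall>T. G_free VG EG VH EH T \<longrightarrow> card T \<le> card S)"

definition n_i :: "'a set \<Rightarrow> 'a set set \<Rightarrow> 'a set \<Rightarrow> nat \<Rightarrow> nat" where
  "n_i VH EH S i = card {v \<in> VH - S. card (neighbours VH EH v \<inter> S) = i}"

end

theory Submission
  imports Defs
begin

lemma sum_fibres:
  fixes T :: "'a set" and c :: "'a \<Rightarrow> nat"
  assumes "finite T"
  shows "(\<Sum>i = a..b. i * card {v \<in> T. c v = i}) = (\<Sum>v\<in>{v\<in>T. a \<le> c v \<and> c v \<le> b}. c v)"
proof -
  let ?A = "{v\<in>T. a \<le> c v \<and> c v \<le> b}"
  have fA: "finite ?A" using assms by simp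
  have "(\<Sum>v\<in>?A. c v) = (\<Sum>i\<in>{a..b}. \<Sum>v\<in>{x\<in>?A. c x = i}. c v)"
    by (rule sum.group[symmetric]) (use fA in auto)
  also have "\<dots> = (\<Sum>i = a..b. i * card {v \<in> T. c v = i})"
  proof (rule sum.cong)
    fix i assume i: "i \<in> {a..b}"
    have e: "{x\<in>?A. c x = i} = {v \<in> T. c v = i}" using i by auto
    show "(\<Sum>v\<in>{x\<in>?A. c x = i}. c v) = i * card {v \<in> T. c v = i}"
      unfolding e by (simp add: mult.commute)
  qed simp
  finally show ?thesis by simp
qed

theorem theorem2p2:
  fixes VH :: "'a set" and EH :: "'a set set" and VG :: "'b set" and EG :: "'b set set"
    and S :: "'a set"
  assumes "simple_graph VH EH" and "simple_graph VG EG"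
    and "VH \<noteq> {}" and "VG \<noteq> {}"
    and "max_degree VH EH \<ge> 1" and "min_degree VG EG \<ge> 1"
    and "max_G_free VG EG VH EH S"
  shows "real (card VH) - (\<Sum>i = min_degree VG EG..max_degree VH EH. real i * real (n_i VH EH S i))
            / real (min_degree VG EG) \<le> real (card S)
     \<and> real (card S) \<le> real (card VH) - (\<Sum>i = min_degree VG EG..max_degree VH EH. real i * real (n_i VH EH S i))
            / real (max_degree VH EH)"
proof -
  define \<delta> where "\<delta> = min_degree VG EG"
  define \<Delta> where "\<Delta> = max_degree VH EH"
  define c where "c v = card (neighbours VH EH v \<inter> S)" for v
  define T where "T = VH - S"
  define A where "A = {v\<in>T. \<delta> \<le> c v \<and> c v \<le> \<Delta>}"
  have fVH: "finite VH" using assms(1) by (simp add: simple_graph_def)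
  have fVG: "finite VG" using assms(2) by (simp add: simple_graph_def)
  have SV: "S \<subseteq> VH" using assms(7) by (simp add: max_G_free_def G_free_def)
  have fS: "finite S" using SV fVH finite_subset by blast
  have fT: "finite T" using fVH T_def by simp
  have cardT: "card T = card VH - card S" "card S \<le> card VH"
    using SV fVH T_def card_Diff_subset[OF fS SV] card_mono[OF fVH SV] by auto
  have cle: "c v \<le> \<Delta>" if "v \<in> VH" for v
  proof -
    have "c v \<le> degree VH EH v" unfolding c_def degree_def
      by (rule card_mono) (auto simp: neighbours_def fVH)
    also have "\<dots> \<le> \<Delta>" unfolding \<Delta>_def max_degree_def using that fVH by simp
    finally show ?thesis .
  qed
  have cge: "\<delta> \<le> c v" if v: "v \<in> T" for v
  proof -
    have vV: "v \<in> VH" "v \<notin> S" using v T_def by auto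
    have "\<not> G_free VG EG VH EH (insert v S)"
    proof
      assume "G_free VG EG VH EH (insert v S)"
      then have "card (insert v S) \<le> card S" using assms(7) by (simp add: max_G_free_def)
      then show False using vV fS by simp
    qed
    then have "contains_copy VG EG (insert v S) (induced_edges EH (insert v S))"
      using SV vV by (simp add: G_free_def)
    then obtain f where f: "inj_on f VG" "f ` VG \<subseteq> insert v S"
      "\<forall>e\<in>EG. f ` e \<in> induced_edges EH (insert v S)"
      unfolding contains_copy_def by blast
    have "v \<in> f ` VG"
    proof (rule ccontr)
      assume nv: "v \<notin> f ` VG"
      have "f ` VG \<subseteq> S" using f(2) nv by blast
      moreover have "\<forall>e\<in>EG. f ` e \<in> induced_edges EH S"
      proof
        fix e assume e: "e \<in> EG"
        have "e \<subseteq> VG" using e assms(2) by (simp add: simple_graph_def)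
        then have "f ` e \<subseteq> S" using \<open>f ` VG \<subseteq> S\<close> by blast
        then show "f ` e \<in> induced_edges EH S" using f(3) e by (simp add: induced_edges_def)
      qed
      ultimately have "contains_copy VG EG S (induced_edges EH S)"
        unfolding contains_copy_def using f(1) by blast
      then show False using assms(7) by (simp add: max_G_free_def G_free_def)
    qed
    then obtain u where u: "u \<in> VG" "f u = v" by blast
    have "\<delta> \<le> degree VG EG u" unfolding \<delta>_def min_degree_def using u fVG by simp
    also have "\<dots> = card (f ` neighbours VG EG u)" unfolding degree_def
      by (rule card_image[symmetric], rule inj_on_subset[OF f(1)]) (auto simp: neighbours_def)
    also have "\<dots> \<le> c v" unfolding c_def
    proof (rule card_mono)
      show "finite (neighbours VH EH v \<inter> S)" using fS by simp
      show "f ` neighbours VG EG u \<subseteq> neighbours VH EH v \<inter> S"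
      proof
        fix y assume "y \<in> f ` neighbours VG EG u"
        then obtain w where w: "w \<in> VG" "{u, w} \<in> EG" "y = f w"
          by (auto simp: neighbours_def)
        have "card {u, w} = 2" using w(2) assms(2) by (simp add: simple_graph_def)
        then have "w \<noteq> u" by auto
        then have "f w \<noteq> v" using f(1) u w(1) inj_on_eq_iff by metis
        then have yS: "y \<in> S" using f(2) w by auto
        have "f ` {u, w} \<in> EH" using f(3) w(2) unfolding induced_edges_def by blast
        then have "{v, y} \<in> EH" using u w by simp
        then show "y \<in> neighbours VH EH v \<inter> S" using yS SV by (auto simp: neighbours_def)
      qed
    qed
    finally show ?thesis .
  qed
  have AT: "A = T" using cge cle T_def A_def by auto
  have sumeq: "(\<Sum>i = \<delta>..\<Delta>. i * n_i VH EH S i) = (\<Sum>v\<in>A. c v)"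
    unfolding n_i_def A_def T_def c_def using sum_fibres[of "VH - S"] fT T_def by simp
  have lo: "\<delta> * card A \<le> (\<Sum>v\<in>A. c v)"
    using sum_mono[of A "\<lambda>_. \<delta>" c] AT cge by (simp add: mult.commute)
  have hi: "(\<Sum>v\<in>A. c v) \<le> \<Delta> * card A"
  proof -
    have "(\<Sum>v\<in>A. c v) \<le> (\<Sum>v\<in>A. \<Delta>)" by (rule sum_mono) (use cle A_def T_def in auto)
    then show ?thesis by (simp add: mult.commute[of \<Delta>])
  qed
  define X where "X = (\<Sum>i = \<delta>..\<Delta>. real i * real (n_i VH EH S i))"
  have X: "X = real (\<Sum>v\<in>A. c v)" unfolding X_def sumeq[symmetric] by simp
  have d1: "real \<delta> \<ge> 1" "real \<Delta> \<ge> 1" using assms(5,6) \<delta>_def \<Delta>_def by auto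
  have cT: "real (card T) = real (card VH) - real (card S)" using cardT by (simp add: of_nat_diff)
  have r1: "real \<delta> * (real (card VH) - real (card S)) \<le> X"
  proof -
    have "real (\<delta> * card T) \<le> real (\<Sum>v\<in>A. c v)" using lo AT by (simp only: of_nat_le_iff)
    then show ?thesis unfolding X cT[symmetric] by (simp only: of_nat_mult)
  qed
  have r2: "X \<le> real \<Delta> * (real (card VH) - real (card S))"
  proof -
    have "card A \<le> card T" using AT by simp
    then have "\<Delta> * card A \<le> \<Delta> * card T" by simp
    then have "(\<Sum>v\<in>A. c v) \<le> \<Delta> * card T" using hi by linarith
    then have "real (\<Sum>v\<in>A. c v) \<le> real (\<Delta> * card T)" by (simp only: of_nat_le_iff)
    then show ?thesis unfolding X cT[symmetric] by (simp only: of_nat_mult)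
  qed
  have "real (card VH) - X / real \<delta> \<le> real (card S)"
    using r1 d1 by (simp add: field_simps)
  moreover have "real (card S) \<le> real (card VH) - X / real \<Delta>"
    using r2 d1 by (simp add: field_simps)
  ultimately show ?thesis unfolding X_def \<delta>_def \<Delta>_def by simp
qed

end
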